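(* Consider a GNEP with $N$ players in which player $\nu$ solves $$\min_{x^\nu}\theta_\nu(x)\quad\text{s.t.}\quad g(x)\le0,\ h^\nu(x^\nu)\le0,$$ where $g:\mathbb{R}^n\to\mathbb{R}^m$ and $h^\nu:\mathbb{R}^{n_\nu}\to\mathbb{R}^{p_\nu}$ are continuously differentiable with convex components, and assume that this GNEP has feasible points (points $x$ with $g(x)\le0$ and $h^\nu(x^\nu)\le0$ for all $\nu$). If $\bar x$ is a KKT point of the corresponding Feasibility GNEP, then $g(\bar x)\le0$, i.e. $\bar x$ is feasible for the GNEP.
   Context: Variables: $x=(x^1,\ldots,x^N)\in\mathbb{R}^n$, $x^\nu\in\mathbb{R}^{n_\nu}$. $v_+=\max\{0,v\}$ componentwise; $\nabla_{x^\nu}$ is the partial (transposed) Jacobian w.r.t. $x^\nu$; $\min$ componentwise. The corresponding Feasibility GNEP: player $\nu$ solves $\min_{x^\nu}\|g_+(x)\|^2$ s.t. $h^\nu(x^\nu)\le0$. $\bar x$ is a KKT point of it if for every $\nu$ there is $w^\nu\in\mathbb{R}^{p_\nu}$ with $\nabla_{x^\nu}\|g_+(\bar x)\|^2+\nabla h^\nu(\bar x^\nu)w^\nu=0$ and $\min\{-h^\nu(\bar x^\nu),w^\nu\}=0$. *)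

theory Defs
  imports "HOL-Analysis.Analysis"
begin

text \<open>Each coordinate i belongs to
  exactly one player blk i :: 'p (finite player type); x^nu is the restriction of x to
  the coordinates with blk i = nu. The shared constraint g has components g j, j < m;
  player nu's private constraint h^nu has components h nu j, j < p nu, each a function
  on real^'n that depends only on the block x^nu.\<close>

definition cont_diff :: "(real^'n \<Rightarrow> real) \<Rightarrow> bool" where
  "cont_diff f \<longleftrightarrow> (\<exists>G. (\<forall>x. (f has_derivative (\<lambda>v. G x \<bullet> v)) (at x)) \<and> continuous_on UNIV G)"

definition depends_only_on_block ::
    "('n \<Rightarrow> 'p) \<Rightarrow> 'p \<Rightarrow> (real^'n \<Rightarrow> real) \<Rightarrow> bool" where
  "depends_only_on_block blk \<nu> f \<longleftrightarrow>
     (\<forall>x y. (\<forall>i. blk i = \<nu> \<longrightarrow> x $ i = y $ i) \<longrightarrow> f x = f y)"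

text \<open>The merit function of the Feasibility GNEP: the squared norm of g_+(x).\<close>
definition sq_viol :: "nat \<Rightarrow> (nat \<Rightarrow> real^'n \<Rightarrow> real) \<Rightarrow> real^'n \<Rightarrow> real" where
  "sq_viol m g x = (\<Sum>j<m. (max 0 (g j x))\<^sup>2)"

text \<open>Partial gradients wrt x^nu are the
  block-nu coordinates of the full gradients.\<close>
definition feas_KKT_point ::
  "('n \<Rightarrow> 'p) \<Rightarrow> nat \<Rightarrow> (nat \<Rightarrow> real^'n \<Rightarrow> real) \<Rightarrow> ('p \<Rightarrow> nat) \<Rightarrow>
   ('p \<Rightarrow> nat \<Rightarrow> real^'n \<Rightarrow> real) \<Rightarrow> real^'n \<Rightarrow> bool" where
  "feas_KKT_point blk m g p h xb \<longleftrightarrow>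
     (\<forall>\<nu>. \<exists>w :: nat \<Rightarrow> real.
        (\<exists>D Gh. (sq_viol m g has_derivative (\<lambda>v. D \<bullet> v)) (at xb) \<and>
           (\<forall>j<p \<nu>. (h \<nu> j has_derivative (\<lambda>v. Gh j \<bullet> v)) (at xb)) \<and>
           (\<forall>i. blk i = \<nu> \<longrightarrow> D $ i + (\<Sum>j<p \<nu>. w j * Gh j $ i) = 0)) \<and>
        (\<forall>j<p \<nu>. min (- h \<nu> j xb) (w j) = 0))"

end

theory Submission imports Defs begin

lemma choice3: "\<forall>x. \<exists>a b c. P x a b c \<Longrightarrow> \<exists>A B C. \<forall>x. P x (A x) (B x) (C x)"
proof -
  assume "\<forall>x. \<exists>a b c. P x a b c"
  then have "\<forall>x. \<exists>t. P x (fst t) (fst (snd t)) (snd (snd t))" by auto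
  then have "\<exists>T. \<forall>x. P x (fst (T x)) (fst (snd (T x))) (snd (snd (T x)))" by (rule choice)
  then obtain T where "\<forall>x. P x (fst (T x)) (fst (snd (T x))) (snd (snd (T x)))" by blast
  then show ?thesis by (intro exI[of _ "\<lambda>x. fst (T x)"] exI[of _ "\<lambda>x. fst (snd (T x))"] exI[of _ "\<lambda>x. snd (snd (T x))"])
qed
lemma grad_ineq:
  fixes f :: "real^'n \<Rightarrow> real"
  assumes cf: "convex_on UNIV f" and df: "(f has_derivative (\<lambda>v. D \<bullet> v)) (at a)"
  shows "f a + D \<bullet> (y - a) \<le> f y"
proof -
  define \<phi> where "\<phi> = (\<lambda>t::real. f (a + t *\<^sub>R (y - a)))"
  have cphi: "convex_on UNIV \<phi>"
  proof (rule convex_onI)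
    fix t u v :: real assume t: "0 < t" "t < 1"
    have "a + ((1 - t) * u + t * v) *\<^sub>R (y - a) = (1 - t) *\<^sub>R (a + u *\<^sub>R (y - a)) + t *\<^sub>R (a + v *\<^sub>R (y - a))"
      by (simp add: algebra_simps)
    then show "\<phi> ((1 - t) *\<^sub>R u + t *\<^sub>R v) \<le> (1 - t) * \<phi> u + t * \<phi> v"
      unfolding \<phi>_def using convex_onD[OF cf, of t] t by simp
  qed simp
  have "((\<lambda>t::real. a + t *\<^sub>R (y - a)) has_derivative (\<lambda>t. t *\<^sub>R (y - a))) (at 0)"
    by (auto intro!: derivative_eq_intros)
  moreover have "(f has_derivative (\<lambda>v. D \<bullet> v)) (at (a + 0 *\<^sub>R (y - a)))" using df by simp
  ultimately have "((f \<circ> (\<lambda>t::real. a + t *\<^sub>R (y - a))) has_derivative ((\<lambda>v. D \<bullet> v) \<circ> (\<lambda>t. t *\<^sub>R (y - a)))) (at 0)"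
    by (rule diff_chain_at)
  then have "(\<phi> has_derivative (\<lambda>t. D \<bullet> (t *\<^sub>R (y - a)))) (at 0)"
    unfolding \<phi>_def by (simp add: o_def)
  then have "(\<phi> has_field_derivative (D \<bullet> (y - a))) (at 0 within UNIV)"
    by (simp add: has_field_derivative_def mult.commute[of _ "D \<bullet> (y - a)"])
  from convex_on_imp_above_tangent[OF cphi _ _ _ this, of 1]
  have "\<phi> 1 - \<phi> 0 \<ge> D \<bullet> (y - a)" by simp
  then show ?thesis unfolding \<phi>_def by simp
qed

lemma convex_sq_pos:
  fixes g :: "real^'n \<Rightarrow> real"
  assumes cg: "convex_on UNIV g"
  shows "convex_on UNIV (\<lambda>x. (max 0 (g x))\<^sup>2)"
proof (rule convex_onI)
  fix t :: real and x y :: "real^'n" assume t: "0 < t" "t < 1"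
  define A where "A = max 0 (g x)"
  define B where "B = max 0 (g y)"
  have "g ((1 - t) *\<^sub>R x + t *\<^sub>R y) \<le> (1 - t) * g x + t * g y"
    using convex_onD[OF cg, of t x y] t by simp
  also have "\<dots> \<le> (1 - t) * A + t * B" unfolding A_def B_def
    using t by (intro add_mono mult_left_mono) auto
  finally have le: "max 0 (g ((1 - t) *\<^sub>R x + t *\<^sub>R y)) \<le> (1 - t) * A + t * B"
    using t by (simp add: A_def B_def)
  then have "(max 0 (g ((1 - t) *\<^sub>R x + t *\<^sub>R y)))\<^sup>2 \<le> ((1 - t) * A + t * B)\<^sup>2"
    by (intro power_mono) auto
  also have "\<dots> \<le> (1 - t) * A\<^sup>2 + t * B\<^sup>2"
  proof -
    have "(1 - t) * A\<^sup>2 + t * B\<^sup>2 - ((1 - t) * A + t * B)\<^sup>2 = t * (1 - t) * (A - B)\<^sup>2"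
      by (simp add: power2_eq_square algebra_simps)
    moreover have "t * (1 - t) * (A - B)\<^sup>2 \<ge> 0" using t by simp
    ultimately show ?thesis by linarith
  qed
  finally show "(max 0 (g ((1 - t) *\<^sub>R x + t *\<^sub>R y)))\<^sup>2 \<le> (1 - t) * (max 0 (g x))\<^sup>2 + t * (max 0 (g y))\<^sup>2"
    by (simp add: A_def B_def)
qed simp

lemma convex_sq_viol:
  assumes "\<And>j. j < m \<Longrightarrow> convex_on UNIV (g j)"
  shows "convex_on UNIV (sq_viol m g)"
  using assms
proof (induction m)
  case 0
  then show ?case by (simp add: sq_viol_def convex_on_const)
next
  case (Suc m)
  have "sq_viol (Suc m) g = (\<lambda>x. sq_viol m g x + (max 0 (g m x))\<^sup>2)"
    by (simp add: sq_viol_def fun_eq_iff)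
  moreover have "convex_on UNIV (sq_viol m g)" using Suc by simp
  moreover have "convex_on UNIV (\<lambda>x. (max 0 (g m x))\<^sup>2)" using Suc.prems by (rule convex_sq_pos) simp
  ultimately show ?case by (simp add: convex_on_add)
qed

theorem theorem4p4:
  fixes blk :: "'n::finite \<Rightarrow> 'p::finite"
    and m :: nat and g :: "nat \<Rightarrow> real^'n \<Rightarrow> real"
    and p :: "'p \<Rightarrow> nat" and h :: "'p \<Rightarrow> nat \<Rightarrow> real^'n \<Rightarrow> real"
    and xb :: "real^'n"
  assumes g_C1: "\<And>j. j < m \<Longrightarrow> cont_diff (g j)"
    and g_convex: "\<And>j. j < m \<Longrightarrow> convex_on UNIV (g j)"
    and h_block: "\<And>\<nu> j. j < p \<nu> \<Longrightarrow> depends_only_on_block blk \<nu> (h \<nu> j)"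
    and h_C1: "\<And>\<nu> j. j < p \<nu> \<Longrightarrow> cont_diff (h \<nu> j)"
    and h_convex: "\<And>\<nu> j. j < p \<nu> \<Longrightarrow> convex_on UNIV (h \<nu> j)"
    and feasible: "\<exists>x. (\<forall>j<m. g j x \<le> 0) \<and> (\<forall>\<nu>. \<forall>j<p \<nu>. h \<nu> j x \<le> 0)"
    and KKT: "feas_KKT_point blk m g p h xb"
  shows "\<forall>j<m. g j xb \<le> 0"
proof -
  obtain x where gx: "\<forall>j<m. g j x \<le> 0" and hx: "\<forall>\<nu>. \<forall>j<p \<nu>. h \<nu> j x \<le> 0"
    using feasible by blast
  have "\<forall>\<nu>. \<exists>w D Gh. ((sq_viol m g has_derivative (\<lambda>v. D \<bullet> v)) (at xb) \<and>
           (\<forall>j<p \<nu>. (h \<nu> j has_derivative (\<lambda>v. Gh j \<bullet> v)) (at xb)) \<and>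
           (\<forall>i. blk i = \<nu> \<longrightarrow> D $ i + (\<Sum>j<p \<nu>. w j * Gh j $ i) = 0)) \<and>
        (\<forall>j<p \<nu>. min (- h \<nu> j xb) (w j) = 0)"
    using KKT unfolding feas_KKT_point_def by blast
  then have "\<exists>w D Gh. \<forall>\<nu>. ((sq_viol m g has_derivative (\<lambda>v. D \<nu> \<bullet> v)) (at xb) \<and>
           (\<forall>j<p \<nu>. (h \<nu> j has_derivative (\<lambda>v. Gh \<nu> j \<bullet> v)) (at xb)) \<and>
           (\<forall>i. blk i = \<nu> \<longrightarrow> D \<nu> $ i + (\<Sum>j<p \<nu>. w \<nu> j * Gh \<nu> j $ i) = 0)) \<and>
        (\<forall>j<p \<nu>. min (- h \<nu> j xb) (w \<nu> j) = 0)"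
    by (rule choice3)
  then obtain w D Gh where
    dD: "\<And>\<nu>. (sq_viol m g has_derivative (\<lambda>v. D \<nu> \<bullet> v)) (at xb)" and
    dGh: "\<And>\<nu> j. j < p \<nu> \<Longrightarrow> (h \<nu> j has_derivative (\<lambda>v. Gh \<nu> j \<bullet> v)) (at xb)" and
    stat: "\<And>\<nu> i. blk i = \<nu> \<Longrightarrow> D \<nu> $ i + (\<Sum>j<p \<nu>. w \<nu> j * Gh \<nu> j $ i) = 0" and
    compl: "\<And>\<nu> j. j < p \<nu> \<Longrightarrow> min (- h \<nu> j xb) (w \<nu> j) = 0"
    by blast
  obtain \<nu>0 :: 'p where True by simp
  define D0 where "D0 = D \<nu>0"
  have DD0: "D \<nu> = D0" for \<nu>
  proof -
    have "(\<lambda>v. D \<nu> \<bullet> v) = (\<lambda>v. D0 \<bullet> v)"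
      using has_derivative_unique[OF dD[of \<nu>] dD[of \<nu>0]] D0_def by simp
    then have "D \<nu> \<bullet> (D \<nu> - D0) = D0 \<bullet> (D \<nu> - D0)" by metis
    then have "(D \<nu> - D0) \<bullet> (D \<nu> - D0) = 0" by (simp add: inner_diff_left)
    then show ?thesis by simp
  qed
  define y where "y \<nu> = (\<chi> i. if blk i = \<nu> then x $ i else xb $ i)" for \<nu>
  have blockpart: "0 \<le> (\<Sum>i\<in>UNIV. if blk i = \<nu> then D0 $ i * (x $ i - xb $ i) else 0)" for \<nu>
  proof -
    have term_le: "w \<nu> j * (Gh \<nu> j \<bullet> (y \<nu> - xb)) \<le> 0" if j: "j < p \<nu>" for j
    proof -
      have "h \<nu> j xb + Gh \<nu> j \<bullet> (y \<nu> - xb) \<le> h \<nu> j (y \<nu>)"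
        by (rule grad_ineq[OF h_convex[OF j] dGh[OF j]])
      moreover have "h \<nu> j (y \<nu>) = h \<nu> j x"
        using h_block[OF j] unfolding depends_only_on_block_def y_def by simp
      ultimately have "Gh \<nu> j \<bullet> (y \<nu> - xb) \<le> - h \<nu> j xb" using hx j by force
      moreover have "w \<nu> j \<ge> 0" "w \<nu> j * h \<nu> j xb = 0" using compl[OF j]
        by (auto simp: min_def split: if_splits)
      ultimately have "w \<nu> j * (Gh \<nu> j \<bullet> (y \<nu> - xb)) \<le> w \<nu> j * (- h \<nu> j xb)"
        by (intro mult_left_mono) auto
      then show ?thesis using \<open>w \<nu> j * h \<nu> j xb = 0\<close> by simp
    qed
    have "(\<Sum>i\<in>UNIV. if blk i = \<nu> then D0 $ i * (x $ i - xb $ i) else 0)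
        = (\<Sum>i\<in>UNIV. if blk i = \<nu> then - (\<Sum>j<p \<nu>. w \<nu> j * Gh \<nu> j $ i) * (x $ i - xb $ i) else 0)"
      using stat DD0 by (intro sum.cong refl) (metis add.commute add_eq_0_iff)
    also have "\<dots> = - (\<Sum>i\<in>UNIV. \<Sum>j<p \<nu>. w \<nu> j * (Gh \<nu> j $ i * (y \<nu> - xb) $ i))"
      unfolding sum_negf[symmetric] by (intro sum.cong refl) (auto simp: y_def sum_distrib_right mult.assoc)
    also have "\<dots> = - (\<Sum>j<p \<nu>. w \<nu> j * (Gh \<nu> j \<bullet> (y \<nu> - xb)))"
      by (subst sum.swap) (simp add: inner_vec_def sum_distrib_left)
    moreover have "(\<Sum>j<p \<nu>. w \<nu> j * (Gh \<nu> j \<bullet> (y \<nu> - xb))) \<le> 0"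
      using term_le by (intro sum_nonpos) simp
    ultimately show ?thesis by simp
  qed
  have "D0 \<bullet> (x - xb) = (\<Sum>i\<in>UNIV. D0 $ i * (x $ i - xb $ i))"
    by (simp add: inner_vec_def)
  also have "\<dots> = (\<Sum>i\<in>UNIV. \<Sum>\<nu>\<in>UNIV. if blk i = \<nu> then D0 $ i * (x $ i - xb $ i) else 0)"
    by simp
  also have "\<dots> = (\<Sum>\<nu>\<in>UNIV. \<Sum>i\<in>UNIV. if blk i = \<nu> then D0 $ i * (x $ i - xb $ i) else 0)"
    by (rule sum.swap)
  finally have Dnn: "D0 \<bullet> (x - xb) \<ge> 0" using blockpart by (simp add: sum_nonneg)
  have "sq_viol m g xb + D0 \<bullet> (x - xb) \<le> sq_viol m g x"
    by (rule grad_ineq[OF convex_sq_viol[OF g_convex] dD[of \<nu>0, unfolded D0_def[symmetric]]])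
  moreover have "sq_viol m g x = 0" using gx by (simp add: sq_viol_def)
  ultimately have "sq_viol m g xb \<le> 0" using Dnn by linarith
  then have "(\<Sum>j<m. (max 0 (g j xb))\<^sup>2) = 0"
    unfolding sq_viol_def by (meson antisym sum_nonneg zero_le_power2)
  then have "\<forall>j<m. (max 0 (g j xb))\<^sup>2 = 0" by (simp add: sum_nonneg_eq_0_iff)
  then show ?thesis by (simp add: max_def split: if_splits) (metis eq_iff linear)
qed

end
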